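(* Let $s>0$, $x_0>0$, and let $P:[0,\infty)\to\mathbb{R}$ be a $\mathcal{C}^2$ increasing function with $P(0)=0$, $P(x)>0$ for $x>0$, satisfying $\int_{x_0}^{\infty}P(z)z^{-1-2/s}\,dz<\infty$. Consider the equation \[ \frac{d\gamma_1}{dx}=\frac{\gamma_1(x)+\gamma_1(x)^2-P(x)}{s\,x\,\gamma_1(x)},\qquad \gamma_1(x_0)=\gamma_0>0, \] and let $\gamma_1^{\star}$ be the separatrix (defined in the context). Then every global solution with $\gamma_1(x_0)>\gamma_1^{\star}(x_0)$ satisfies $C_1x^{1/s}\le\gamma_1(x)\le C_2x^{1/s}$ for all sufficiently large $x$, for some constants $0<C_1<C_2$, while the separatrix satisfies, for some $C>0$ and all $x\ge x_0$, \[ \gamma_c(x)<\gamma_1^{\star}(x)\le\min\Big(\lim_{y\to\infty}\gamma_c(y),\;C\,x^{1/s}\Big), \] where $\gamma_c(x)=\frac{\sqrt{1+4P(x)}-1}{2}$. In particular, if $\lim_{x\to\infty}P(x)<\infty$, the separatrix is the only bounded global solution.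
   Context: Solutions are taken in the region $x>0$, $\gamma_1>0$; a solution is global if it can be continued, remaining strictly positive, to all $x\ge x_0$. Under the stated hypotheses there is a unique value $\gamma_1^{\star}(x_0)>0$ such that the solution with initial value $\gamma_1(x_0)$ is global if and only if $\gamma_1(x_0)\ge\gamma_1^{\star}(x_0)$; the separatrix $\gamma_1^{\star}(x)$ is the solution with initial value $\gamma_1^{\star}(x_0)$ (the smallest global solution). *)

theory Defs
  imports "HOL-Analysis.Analysis"
begin

definition C2_on_nonneg :: "(real \<Rightarrow> real) \<Rightarrow> bool" where
  "C2_on_nonneg P \<longleftrightarrow> (\<exists>P1 P2.
     (\<forall>x\<ge>0. (P has_real_derivative P1 x) (at x within {0..}) \<and>
              (P1 has_real_derivative P2 x) (at x within {0..})) \<and>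
     continuous_on {0..} P2)"

definition ode_rhs :: "real \<Rightarrow> (real \<Rightarrow> real) \<Rightarrow> real \<Rightarrow> real \<Rightarrow> real" where
  "ode_rhs s P x g = (g + g^2 - P x) / (s * x * g)"

definition global_sol :: "real \<Rightarrow> (real \<Rightarrow> real) \<Rightarrow> real \<Rightarrow> (real \<Rightarrow> real) \<Rightarrow> bool" where
  "global_sol s P x0 g \<longleftrightarrow>
     (\<forall>x\<ge>x0. g x > 0 \<and> (g has_real_derivative ode_rhs s P x (g x)) (at x within {x0..}))"

definition separatrix :: "real \<Rightarrow> (real \<Rightarrow> real) \<Rightarrow> real \<Rightarrow> (real \<Rightarrow> real) \<Rightarrow> bool" where
  "separatrix s P x0 g \<longleftrightarrow> global_sol s P x0 g \<and>
     (\<forall>h. global_sol s P x0 h \<longrightarrow> g x0 \<le> h x0)"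

definition gamma_c :: "(real \<Rightarrow> real) \<Rightarrow> real \<Rightarrow> real" where
  "gamma_c P x = (sqrt (1 + 4 * P x) - 1) / 2"

end

theory Submission
  imports Defs
begin


primrec pit :: "(real \<Rightarrow> real \<Rightarrow> real) \<Rightarrow> real \<Rightarrow> real \<Rightarrow> nat \<Rightarrow> real \<Rightarrow> real" where
  "pit F a y0 0 = (\<lambda>t. y0)"
| "pit F a y0 (Suc n) = (\<lambda>t. y0 + integral {a..t} (\<lambda>\<tau>. F \<tau> (pit F a y0 n \<tau>)))"

lemma within_upto: fixes t N a :: real assumes "t < N" shows "at t within {a..N} = at t within {a..}"
  by (rule at_within_nhd[where S="{..<N}"]) (use assms in \<open>auto simp: open_lessThan\<close>)

lemma cont_upto:
  fixes f :: "real \<Rightarrow> real" and a :: real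
  assumes "\<And>N. N \<ge> a \<Longrightarrow> continuous_on {a..N} f"
  shows "continuous_on {a..} f"
  unfolding continuous_on_eq_continuous_within
proof (intro ballI)
  fix t assume t: "t \<in> {a..}"
  have "continuous_on {a..t+1} f" using assms t by auto
  hence "continuous (at t within {a..t+1}) f" using t by (simp add: continuous_on_eq_continuous_within)
  thus "continuous (at t within {a..}) f" using within_upto[of t "t+1" a] by simp
qed

lemma comp_cont:
  fixes F :: "real \<Rightarrow> real \<Rightarrow> real"
  assumes cont: "\<And>y. continuous_on S (\<lambda>t. F t y)"
    and lip: "\<And>t y z. t \<in> S \<Longrightarrow> \<bar>F t y - F t z\<bar> \<le> K * \<bar>y - z\<bar>"
    and phi: "continuous_on S \<phi>"
  shows "continuous_on S (\<lambda>t. F t (\<phi> t))"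
  unfolding continuous_on_def
proof
  fix t assume t: "t \<in> S"
  have 1: "((\<lambda>u. F u (\<phi> t)) \<longlongrightarrow> F t (\<phi> t)) (at t within S)"
    using cont[of "\<phi> t"] t by (simp add: continuous_on_def)
  have 2: "((\<lambda>u. F u (\<phi> u) - F u (\<phi> t)) \<longlongrightarrow> 0) (at t within S)"
  proof (rule Lim_null_comparison)
    show "\<forall>\<^sub>F u in at t within S. norm (F u (\<phi> u) - F u (\<phi> t)) \<le> K * \<bar>\<phi> u - \<phi> t\<bar>"
      unfolding eventually_at_filter by (intro always_eventually) (auto intro: lip)
    have "((\<lambda>u. \<phi> u - \<phi> t) \<longlongrightarrow> 0) (at t within S)" using phi t
      by (simp add: continuous_on_def LIM_zero)
    thus "((\<lambda>u. K * \<bar>\<phi> u - \<phi> t\<bar>) \<longlongrightarrow> 0) (at t within S)"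
      by (intro tendsto_mult_right_zero tendsto_rabs_zero)
  qed
  from tendsto_add[OF 1 2] show "((\<lambda>u. F u (\<phi> u)) \<longlongrightarrow> F t (\<phi> t)) (at t within S)" by simp
qed

lemma int_pow:
  assumes "a \<le> t"
  shows "((\<lambda>\<tau>. (\<tau> - a)^n) has_integral (t - a)^(Suc n) / real (Suc n)) {a..t}"
proof -
  have "((\<lambda>\<tau>. (\<tau> - a)^(Suc n) / real (Suc n)) has_vector_derivative (\<tau> - a)^n) (at \<tau> within {a..t})" for \<tau>
  proof -
    have "((\<lambda>\<tau>. (\<tau> - a)^(Suc n)) has_real_derivative (real (Suc n) * (\<tau> - a)^n)) (at \<tau> within {a..t})"
      by (rule derivative_eq_intros refl | simp)+
    from DERIV_cdivide[OF this, of "real (Suc n)"]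
    show ?thesis unfolding has_real_derivative_iff_has_vector_derivative[symmetric] by simp
  qed
  from fundamental_theorem_of_calculus[OF assms this] show ?thesis by simp
qed

lemma int_bound_const:
  fixes f :: "real \<Rightarrow> real"
  assumes "f integrable_on {a..b}" "a \<le> b" "\<And>x. x \<in> {a..b} \<Longrightarrow> \<bar>f x\<bar> \<le> c"
  shows "\<bar>integral {a..b} f\<bar> \<le> c * (b - a)"
proof -
  have "norm (integral {a..b} f) \<le> integral {a..b} (\<lambda>_. c)"
    by (rule integral_norm_bound_integral) (use assms in auto)
  thus ?thesis using assms(2) by (simp add: mult.commute)
qed

lemma picard:
  fixes F :: "real \<Rightarrow> real \<Rightarrow> real"
  assumes K: "K \<ge> 0"
    and cont: "\<And>y. continuous_on {a..} (\<lambda>t. F t y)"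
    and lip: "\<And>t y z. t \<ge> a \<Longrightarrow> \<bar>F t y - F t z\<bar> \<le> K * \<bar>y - z\<bar>"
  shows "\<exists>y. y a = y0 \<and> (\<forall>t\<ge>a. (y has_real_derivative F t (y t)) (at t within {a..}))"
proof -
  let ?p = "pit F a y0"
  have lip': "\<And>t y z. t \<in> {a..} \<Longrightarrow> \<bar>F t y - F t z\<bar> \<le> K * \<bar>y - z\<bar>" using lip by auto
  have contp: "continuous_on {a..} (?p n)" for n
  proof (induction n)
    case 0 show ?case by simp
  next
    case (Suc n)
    have g: "continuous_on {a..} (\<lambda>\<tau>. F \<tau> (?p n \<tau>))"
      by (rule comp_cont[OF cont lip' Suc])
    show ?case unfolding pit.simps
    proof (rule cont_upto)
      fix N assume "a \<le> N"
      have "continuous_on {a..N} (\<lambda>\<tau>. F \<tau> (?p n \<tau>))" using g by (rule continuous_on_subset) auto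
      hence "continuous_on {a..N} (\<lambda>x. integral {a..x} (\<lambda>\<tau>. F \<tau> (?p n \<tau>)))"
        by (intro indefinite_integral_continuous_1 integrable_continuous_interval)
      thus "continuous_on {a..N} (\<lambda>t. y0 + integral {a..t} (\<lambda>\<tau>. F \<tau> (?p n \<tau>)))"
        by (intro continuous_intros)
    qed
  qed
  have contg: "continuous_on {a..} (\<lambda>\<tau>. F \<tau> (?p n \<tau>))" for n
    by (rule comp_cont[OF cont lip' contp])
  have intg: "(\<lambda>\<tau>. F \<tau> (?p n \<tau>)) integrable_on {a..t}" for n t
    by (rule integrable_continuous_interval, rule continuous_on_subset[OF contg]) auto
  define d where "d i t = ?p (Suc i) t - ?p i t" for i t
  define Y where "Y t = y0 + suminf (\<lambda>i. d i t)" for t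
  have psum: "?p n t = y0 + (\<Sum>i<n. d i t)" for n t
    unfolding d_def by (subst sum_lessThan_telescope[of "\<lambda>i. ?p i t"]) simp
  have ul: "uniform_limit {a..N} ?p Y sequentially" if N: "a \<le> N" for N
  proof -
    have "bounded ((\<lambda>t. F t y0) ` {a..N})"
      by (intro compact_imp_bounded compact_continuous_image continuous_on_subset[OF cont]) auto
    then obtain B0 where B0: "B0 > 0" "\<And>t. t \<in> {a..N} \<Longrightarrow> \<bar>F t y0\<bar> \<le> B0"
      by (auto simp: bounded_pos)
    define B where "B = B0 * (N - a)"
    have B: "B \<ge> 0" using B0 N by (simp add: B_def)
    have D: "\<forall>t\<in>{a..N}. \<bar>d n t\<bar> \<le> B * (K*(t-a))^n / fact n" for n
    proof (induction n)
      case 0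
      show ?case
      proof
        fix t assume t: "t \<in> {a..N}"
        have "\<bar>integral {a..t} (\<lambda>\<tau>. F \<tau> y0)\<bar> \<le> B0 * (t - a)"
          by (rule int_bound_const) (use t B0 intg[of 0 t] in auto)
        also have "\<dots> \<le> B" unfolding B_def using t B0 by (auto intro: mult_left_mono)
        finally show "\<bar>d 0 t\<bar> \<le> B * (K*(t-a))^0 / fact 0" by (simp add: d_def)
      qed
    next
      case (Suc n)
      show ?case
      proof
        fix t assume t: "t \<in> {a..N}"
        define c where "c = K * B * K^n / fact n"
        have "d (Suc n) t = integral {a..t} (\<lambda>\<tau>. F \<tau> (?p (Suc n) \<tau>)) - integral {a..t} (\<lambda>\<tau>. F \<tau> (?p n \<tau>))"
          by (simp add: d_def del: pit.simps) (simp only: pit.simps; simp)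
        also have "\<dots> = integral {a..t} (\<lambda>\<tau>. F \<tau> (?p (Suc n) \<tau>) - F \<tau> (?p n \<tau>))"
          by (rule integral_diff[symmetric]) (rule intg)+
        finally have eq: "d (Suc n) t = \<dots>" .
        have hi: "((\<lambda>\<tau>. c * (\<tau> - a)^n) has_integral c * ((t - a)^(Suc n) / real (Suc n))) {a..t}"
          by (rule has_integral_mult_right, rule int_pow) (use t in auto)
        have "norm (integral {a..t} (\<lambda>\<tau>. F \<tau> (?p (Suc n) \<tau>) - F \<tau> (?p n \<tau>)))
              \<le> integral {a..t} (\<lambda>\<tau>. c * (\<tau> - a)^n)"
        proof (rule integral_norm_bound_integral)
          show "(\<lambda>\<tau>. F \<tau> (?p (Suc n) \<tau>) - F \<tau> (?p n \<tau>)) integrable_on {a..t}"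
            by (intro integrable_diff intg)
          show "(\<lambda>\<tau>. c * (\<tau> - a)^n) integrable_on {a..t}" using hi by blast
          fix \<tau> assume tau: "\<tau> \<in> {a..t}"
          hence tauN: "\<tau> \<in> {a..N}" using t by auto
          have "norm (F \<tau> (?p (Suc n) \<tau>) - F \<tau> (?p n \<tau>)) \<le> K * \<bar>d n \<tau>\<bar>"
            using lip[of \<tau>] tau by (simp add: d_def)
          also have "\<dots> \<le> K * (B * (K*(\<tau>-a))^n / fact n)"
            using Suc tauN K by (intro mult_left_mono) auto
          also have "\<dots> = c * (\<tau> - a)^n" by (simp add: c_def power_mult_distrib)
          finally show "norm (F \<tau> (?p (Suc n) \<tau>) - F \<tau> (?p n \<tau>)) \<le> c * (\<tau> - a)^n" .
        qed
        also have "\<dots> = c * ((t - a)^(Suc n) / real (Suc n))" using hi by (rule integral_unique)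
        also have "\<dots> = B * (K*(t-a))^(Suc n) / fact (Suc n)"
          by (simp only: c_def power_mult_distrib fact_Suc of_nat_mult power_Suc) (simp add: divide_simps ac_simps)
        finally show "\<bar>d (Suc n) t\<bar> \<le> B * (K*(t-a))^(Suc n) / fact (Suc n)" using eq by simp
      qed
    qed
    define M where "M n = B * (inverse (fact n) * (K*(N-a))^n)" for n
    have Mb: "norm (d n t) \<le> M n" if "t \<in> {a..N}" for n t
    proof -
      have "\<bar>d n t\<bar> \<le> B * (K*(t-a))^n / fact n" using D that by auto
      also have "\<dots> \<le> M n" unfolding M_def using that K B
        by (auto simp: divide_simps intro!: mult_left_mono power_mono mult_mono)
      finally show ?thesis by simp
    qed
    have sM: "summable M" unfolding M_def by (intro summable_mult summable_exp)
    have "uniform_limit {a..N} (\<lambda>n t. \<Sum>i<n. d i t) (\<lambda>t. suminf (\<lambda>i. d i t)) sequentially"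
      by (rule Weierstrass_m_test[of "{a..N}" d M]) (use Mb sM in auto)
    thus ?thesis unfolding uniform_limit_iff psum Y_def by (simp add: dist_real_def)
  qed
  have contY: "continuous_on {a..} Y"
  proof (rule cont_upto)
    fix N assume "a \<le> N"
    show "continuous_on {a..N} Y"
      by (rule uniform_limit_theorem[OF _ ul[OF \<open>a \<le> N\<close>]])
         (auto intro!: always_eventually continuous_on_subset[OF contp])
  qed
  have contGY: "continuous_on {a..} (\<lambda>\<tau>. F \<tau> (Y \<tau>))" by (rule comp_cont[OF cont lip' contY])
  have inteq: "Y t = y0 + integral {a..t} (\<lambda>\<tau>. F \<tau> (Y \<tau>))" if t: "t \<ge> a" for t
  proof -
    have u: "uniform_limit {a..t} ?p Y sequentially" using ul t by auto
    have l1: "(\<lambda>n. ?p (Suc n) t) \<longlonglongrightarrow> Y t"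
      using tendsto_uniform_limitI[OF u, of t] t by (intro LIMSEQ_Suc) simp
    have intY: "(\<lambda>\<tau>. F \<tau> (Y \<tau>)) integrable_on {a..t}"
      by (rule integrable_continuous_interval, rule continuous_on_subset[OF contGY]) auto
    have l2: "(\<lambda>n. ?p (Suc n) t) \<longlonglongrightarrow> y0 + integral {a..t} (\<lambda>\<tau>. F \<tau> (Y \<tau>))"
    proof -
      have "(\<lambda>n. integral {a..t} (\<lambda>\<tau>. F \<tau> (?p n \<tau>))) \<longlonglongrightarrow> integral {a..t} (\<lambda>\<tau>. F \<tau> (Y \<tau>))"
      proof (rule tendstoI)
        fix e :: real assume e: "e > 0"
        define e' where "e' = e / (K * (t - a) + 1)"
        have e': "e' > 0" using e K t unfolding e'_def by (intro divide_pos_pos) (auto intro: add_nonneg_pos)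
        from u e' have ev: "\<forall>\<^sub>F n in sequentially. \<forall>x\<in>{a..t}. dist (?p n x) (Y x) < e'"
          unfolding uniform_limit_iff by blast
        show "\<forall>\<^sub>F n in sequentially. dist (integral {a..t} (\<lambda>\<tau>. F \<tau> (?p n \<tau>))) (integral {a..t} (\<lambda>\<tau>. F \<tau> (Y \<tau>))) < e"
        proof (rule eventually_mono[OF ev])
          fix n assume h: "\<forall>x\<in>{a..t}. dist (?p n x) (Y x) < e'"
          have "\<bar>integral {a..t} (\<lambda>\<tau>. F \<tau> (?p n \<tau>) - F \<tau> (Y \<tau>))\<bar> \<le> (K * e') * (t - a)"
          proof (rule int_bound_const)
            show "(\<lambda>\<tau>. F \<tau> (?p n \<tau>) - F \<tau> (Y \<tau>)) integrable_on {a..t}"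
              by (intro integrable_diff intg intY)
            fix x assume x: "x \<in> {a..t}"
            have "\<bar>F x (?p n x) - F x (Y x)\<bar> \<le> K * \<bar>?p n x - Y x\<bar>" using lip x by auto
            also have "\<dots> \<le> K * e'" using h x K by (intro mult_left_mono) (auto simp: dist_real_def less_imp_le)
            finally show "\<bar>F x (?p n x) - F x (Y x)\<bar> \<le> K * e'" .
          qed (use t in auto)
          also have "(K * e') * (t - a) < e"
          proof -
            have "(K * e') * (t - a) = e * (K * (t - a)) / (K * (t - a) + 1)"
              using K t mult_nonneg_nonneg[of K "t-a"] by (simp add: e'_def)
            also have "\<dots> < e" using e K t mult_nonneg_nonneg[of K "t-a"] by (simp add: divide_simps add_nonneg_pos)
            finally show ?thesis .
          qed
          finally show "dist (integral {a..t} (\<lambda>\<tau>. F \<tau> (?p n \<tau>))) (integral {a..t} (\<lambda>\<tau>. F \<tau> (Y \<tau>))) < e"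
            by (simp add: dist_real_def integral_diff[OF intg intY])
        qed
      qed
      thus ?thesis by (simp add: tendsto_add)
    qed
    show ?thesis using LIMSEQ_unique[OF l1 l2] .
  qed
  show ?thesis
  proof (intro exI conjI allI impI)
    show "Y a = y0" using inteq[of a] by simp
    fix t assume t: "a \<le> t"
    have c: "continuous_on {a..t+1} (\<lambda>\<tau>. F \<tau> (Y \<tau>))" by (rule continuous_on_subset[OF contGY]) auto
    have "((\<lambda>x. y0 + integral {a..x} (\<lambda>\<tau>. F \<tau> (Y \<tau>))) has_real_derivative F t (Y t)) (at t within {a..t+1})"
      using integral_has_real_derivative[OF c, of t] t by (auto intro!: derivative_eq_intros)
    hence "(Y has_real_derivative F t (Y t)) (at t within {a..t+1})"
      by (rule has_field_derivative_transform_within[where d=1]) (use t inteq in auto)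
    thus "(Y has_real_derivative F t (Y t)) (at t within {a..})" using within_upto[of t "t+1" a] by simp
  qed
qed



lemma first_hit:
  fixes h :: "real \<Rightarrow> real"
  assumes "a \<le> y" "continuous_on {a..y} h" "h a > 0" "h y \<le> 0"
  shows "\<exists>t\<in>{a<..y}. h t \<le> 0 \<and> (\<forall>z\<in>{a..<t}. h z > 0)"
proof -
  define S where "S = {a..y} \<inter> h -` {..0}"
  have cl: "closed S" unfolding S_def by (rule continuous_closed_preimage) (use assms in auto)
  have ne: "S \<noteq> {}" using assms by (auto simp: S_def)
  have bd: "bdd_below S" unfolding S_def by (auto intro: bdd_belowI[where m=a])
  define t where "t = Inf S"
  have tS: "t \<in> S" unfolding t_def by (rule closed_contains_Inf[OF ne bd cl])
  hence "t \<in> {a..y}" "h t \<le> 0" by (auto simp: S_def)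
  moreover have "t \<noteq> a" using \<open>h t \<le> 0\<close> assms(3) by auto
  moreover have "\<forall>z\<in>{a..<t}. h z > 0"
  proof
    fix z assume z: "z \<in> {a..<t}"
    show "h z > 0"
    proof (rule ccontr)
      assume "\<not> h z > 0"
      hence "z \<in> S" using z \<open>t \<in> {a..y}\<close> by (auto simp: S_def)
      hence "t \<le> z" unfolding t_def using bd by (rule cInf_lower)
      thus False using z by auto
    qed
  qed
  ultimately show ?thesis by auto
qed

lemma last_hit:
  fixes u :: "real \<Rightarrow> real"
  assumes "a \<le> b" "continuous_on {a..b} u" "u a \<le> 0" "u b > 0"
  shows "\<exists>t\<in>{a..<b}. u t \<le> 0 \<and> (\<forall>z\<in>{t<..b}. u z > 0)"
proof -
  define S where "S = {a..b} \<inter> u -` {..0}"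
  have cl: "closed S" unfolding S_def by (rule continuous_closed_preimage) (use assms in auto)
  have ne: "S \<noteq> {}" using assms by (auto simp: S_def)
  have bd: "bdd_above S" unfolding S_def by (auto intro: bdd_aboveI[where M=b])
  define t where "t = Sup S"
  have tS: "t \<in> S" unfolding t_def by (rule closed_contains_Sup[OF ne bd cl])
  hence "t \<in> {a..b}" "u t \<le> 0" by (auto simp: S_def)
  moreover have "t \<noteq> b" using \<open>u t \<le> 0\<close> assms(4) by auto
  moreover have "\<forall>z\<in>{t<..b}. u z > 0"
  proof
    fix z assume z: "z \<in> {t<..b}"
    show "u z > 0"
    proof (rule ccontr)
      assume "\<not> u z > 0"
      hence "z \<in> S" using z \<open>t \<in> {a..b}\<close> by (auto simp: S_def)
      hence "z \<le> t" unfolding t_def using bd by (meson cSup_upper)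
      thus False using z by auto
    qed
  qed
  ultimately show ?thesis by auto
qed

lemma GL:
  fixes u :: "real \<Rightarrow> real"
  assumes ab: "a \<le> b" and cu: "continuous_on {a..b} u"
    and der: "\<And>x. a < x \<Longrightarrow> x < b \<Longrightarrow> \<exists>D. (u has_real_derivative D) (at x) \<and> (u x > 0 \<longrightarrow> D \<le> K * u x)"
    and ua: "u a \<le> 0"
  shows "u b \<le> 0"
proof (rule ccontr)
  assume "\<not> u b \<le> 0"
  hence ub: "u b > 0" by simp
  obtain t where t: "t \<in> {a..<b}" "u t \<le> 0" "\<forall>z\<in>{t<..b}. u z > 0"
    using last_hit[OF ab cu ua ub] by blast
  define v where "v x = u x * exp (- K * x)" for x
  have "v b \<le> v t"
  proof (rule DERIV_nonpos_imp_decreasing_open[of t b v])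
    show "t \<le> b" using t by auto
    show "continuous_on {t..b} v" unfolding v_def
      by (intro continuous_intros continuous_on_subset[OF cu]) (use t in auto)
    fix x assume x: "t < x" "x < b"
    obtain D where D: "(u has_real_derivative D) (at x)" "u x > 0 \<longrightarrow> D \<le> K * u x"
      using der[of x] x t by auto
    have "(v has_real_derivative (D * exp (- K * x) + u x * (exp (- K * x) * (- K)))) (at x)"
      unfolding v_def by (auto intro!: derivative_eq_intros D(1))
    moreover have "D * exp (- K * x) + u x * (exp (- K * x) * (- K)) \<le> 0"
    proof -
      have "u x > 0" using t x by auto
      hence "D - K * u x \<le> 0" using D(2) by auto
      hence "exp (- K * x) * (D - K * u x) \<le> 0" by (simp add: mult_nonneg_nonpos)
      thus ?thesis by (simp add: algebra_simps)
    qed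
    ultimately show "\<exists>y. (v has_real_derivative y) (at x) \<and> y \<le> 0" by blast
  qed
  moreover have "v t \<le> 0" using t by (simp add: v_def mult_nonpos_nonneg)
  moreover have "v b > 0" using ub by (simp add: v_def)
  ultimately show False by simp
qed

lemma C2_cont:
  assumes "C2_on_nonneg P"
  shows "continuous_on {0..} P"
proof -
  obtain P1 where "\<forall>x\<ge>0. (P has_real_derivative P1 x) (at x within {0..})"
    using assms unfolding C2_on_nonneg_def by blast
  thus ?thesis unfolding continuous_on_eq_continuous_within
    using DERIV_continuous by fastforce
qed

lemma at_within_ge_open:
  fixes x0 x :: real
  assumes "x0 < x"
  shows "at x within {x0..} = at x"
  by (rule at_within_nhd[where S="{x0<..}"]) (use assms in auto)

lemma within_from:
  fixes x0 x1 t :: real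
  assumes "x1 < t" "x0 \<le> x1"
  shows "at t within {x1..} = at t within {x0..}"
  by (rule at_within_nhd[where S="{x1<..}"]) (use assms in auto)

lemma lip_clamp:
  fixes m p Pm q q0 u w :: real
  assumes m: "m > 0" and p: "0 \<le> p" "p \<le> Pm" and q: "q0 > 0" "q0 \<le> q"
  shows "\<bar>(1 + max m u - p / max m u)/q - (1 + max m w - p / max m w)/q\<bar> \<le> ((1 + Pm/m^2)/q0) * \<bar>u - w\<bar>"
proof -
  define A where "A = max m u"
  define B where "B = max m w"
  have A: "A \<ge> m" and B: "B \<ge> m" by (auto simp: A_def B_def)
  have Ap: "A > 0" and Bp: "B > 0" using A B m by auto
  have AB: "\<bar>A - B\<bar> \<le> \<bar>u - w\<bar>" by (auto simp: A_def B_def max_def)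
  have eq: "(1 + A - p / A)/q - (1 + B - p / B)/q = (A - B) * (1 + p / (A * B)) / q"
    using Ap Bp q by (simp add: field_simps)
  have pAB: "p / (A * B) \<le> Pm / m^2"
    using p m A B by (intro frac_le) (auto simp: power2_eq_square intro: mult_mono order_trans)
  have nn: "0 \<le> 1 + p / (A * B)" using p Ap Bp by simp
  have "\<bar>(A - B) * (1 + p / (A * B)) / q\<bar> = \<bar>A - B\<bar> * (1 + p / (A * B)) / q"
    using nn q by (simp add: abs_mult)
  also have "\<dots> \<le> \<bar>u - w\<bar> * (1 + Pm/m^2) / q0"
    using AB pAB nn q by (intro frac_le mult_mono) auto
  finally show ?thesis unfolding eq[unfolded A_def B_def] by (simp add: A_def B_def mult.commute)
qed

locale odeP =
  fixes s x0 :: real and P :: "real \<Rightarrow> real"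
  assumes s_pos: "s > 0" and x0_pos: "x0 > 0"
    and Pcont: "continuous_on {0..} P"
    and Pmono: "strict_mono_on {0..} P"
    and P0: "P 0 = 0"
begin

lemma P_le: "0 \<le> x \<Longrightarrow> x \<le> y \<Longrightarrow> P x \<le> P y"
  using Pmono by (cases "x = y") (auto simp: strict_mono_on_def less_imp_le)

lemma P_less: "0 \<le> x \<Longrightarrow> x < y \<Longrightarrow> P x < P y"
  using Pmono by (auto simp: strict_mono_on_def)

lemma P_nonneg: "0 \<le> x \<Longrightarrow> 0 \<le> P x"
  using P_le[of 0 x] P0 by simp

lemma P_posx: "0 < x \<Longrightarrow> 0 < P x"
  using P_less[of 0 x] P0 by simp

lemma rhs_alt: "x > 0 \<Longrightarrow> g > 0 \<Longrightarrow> ode_rhs s P x g = (1 + g - P x / g) / (s * x)"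
  unfolding ode_rhs_def using s_pos by (simp add: field_simps power2_eq_square)

lemma rhs_mono: "x > 0 \<Longrightarrow> 0 < u \<Longrightarrow> u \<le> w \<Longrightarrow> ode_rhs s P x u \<le> ode_rhs s P x w"
proof -
  assume x: "x > 0" and u: "0 < u" "u \<le> w"
  have "P x / w \<le> P x / u" using P_nonneg[of x] x u by (intro divide_left_mono) auto
  hence "1 + u - P x / u \<le> 1 + w - P x / w" using u by simp
  thus ?thesis using rhs_alt[OF x u(1)] rhs_alt[OF x] u x s_pos
    by (simp add: divide_right_mono)
qed

lemma gsol_pos: "global_sol s P x0 g \<Longrightarrow> x \<ge> x0 \<Longrightarrow> g x > 0"
  unfolding global_sol_def by auto

lemma gsol_der: "global_sol s P x0 g \<Longrightarrow> x \<ge> x0 \<Longrightarrow>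
    (g has_real_derivative ode_rhs s P x (g x)) (at x within {x0..})"
  unfolding global_sol_def by auto

lemma gsol_der_at: "global_sol s P x0 g \<Longrightarrow> x > x0 \<Longrightarrow>
    (g has_real_derivative ode_rhs s P x (g x)) (at x)"
  using gsol_der[of g x] at_within_ge_open[of x0 x] by simp

lemma gsol_cont: "global_sol s P x0 g \<Longrightarrow> continuous_on {x0..} g"
  unfolding continuous_on_eq_continuous_within using gsol_der DERIV_continuous by fastforce


lemma diff_pos:
  assumes g1: "global_sol s P x0 g1" and g2: "global_sol s P x0 g2"
    and lt: "g2 x0 < g1 x0" and y: "y \<ge> x0"
  shows "g2 y < g1 y"
proof (rule ccontr)
  assume ny: "\<not> g2 y < g1 y"
  define h where "h x = g1 x - g2 x" for x
  have hc: "continuous_on {x0..y} h" unfolding h_def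
    by (intro continuous_intros continuous_on_subset[OF gsol_cont[OF g1]] continuous_on_subset[OF gsol_cont[OF g2]]) auto
  obtain t where t: "t \<in> {x0<..y}" "h t \<le> 0" "\<forall>z\<in>{x0..<t}. h z > 0"
    using first_hit[OF y hc] lt ny by (auto simp: h_def)
  have "h x0 \<le> h t"
  proof (rule DERIV_nonneg_imp_increasing_open[of x0 t h])
    show "x0 \<le> t" using t by auto
    show "continuous_on {x0..t} h" using hc by (rule continuous_on_subset) (use t in auto)
    fix z assume z: "x0 < z" "z < t"
    have "(h has_real_derivative ode_rhs s P z (g1 z) - ode_rhs s P z (g2 z)) (at z)"
      unfolding h_def using z by (intro DERIV_diff gsol_der_at[OF g1] gsol_der_at[OF g2]) auto
    moreover have "ode_rhs s P z (g2 z) \<le> ode_rhs s P z (g1 z)"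
    proof -
      have "g2 z < g1 z" using t(3) z by (auto simp: h_def)
      thus ?thesis using gsol_pos[OF g2, of z] x0_pos z by (intro rhs_mono) auto
    qed
    ultimately show "\<exists>D. (h has_real_derivative D) (at z) \<and> D \<ge> 0" by auto
  qed
  thus False using t lt by (simp add: h_def)
qed

lemma diff_growth:
  assumes g1: "global_sol s P x0 g1" and g2: "global_sol s P x0 g2"
    and lt: "g2 x0 < g1 x0" and x: "x \<ge> x0"
  shows "(g1 x0 - g2 x0) * (x / x0) powr (1/s) \<le> g1 x - g2 x"
proof -
  define k where "k z = (g1 z - g2 z) * z powr (-1/s)" for z
  have "k x0 \<le> k x"
  proof (rule DERIV_nonneg_imp_increasing_open[of x0 x k])
    show "x0 \<le> x" by fact
    show "continuous_on {x0..x} k" unfolding k_def using x0_pos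
      by (intro continuous_intros continuous_on_subset[OF gsol_cont[OF g1]] continuous_on_subset[OF gsol_cont[OF g2]]) auto
    fix z assume z: "x0 < z" "z < x"
    have zp: "z > 0" using z x0_pos by simp
    define f1 where "f1 = ode_rhs s P z (g1 z)"
    define f2 where "f2 = ode_rhs s P z (g2 z)"
    have d: "(k has_real_derivative (f1 - f2) * z powr (-1/s) + ((-1/s) * z powr (-1/s - 1)) * (g1 z - g2 z)) (at z)"
      unfolding k_def f1_def f2_def using zp z
      by (intro DERIV_mult DERIV_diff gsol_der_at[OF g1] gsol_der_at[OF g2] has_real_derivative_powr) auto
    have pos1: "g1 z > 0" and pos2: "g2 z > 0" using gsol_pos g1 g2 z by auto
    have lt': "g2 z < g1 z" using diff_pos[OF g1 g2 lt, of z] z by auto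
    have "(f1 - f2) - (g1 z - g2 z)/(s*z) = P z * (1/g2 z - 1/g1 z) / (s * z)"
      unfolding f1_def f2_def rhs_alt[OF zp pos1] rhs_alt[OF zp pos2]
      using zp s_pos pos1 pos2 by (simp add: field_simps)
    also have "\<dots> \<ge> 0"
    proof -
      have "1/g1 z \<le> 1/g2 z" using pos2 lt' by (simp add: frac_le)
      thus ?thesis using P_nonneg[of z] zp s_pos by (auto intro!: divide_nonneg_pos mult_nonneg_nonneg)
    qed
    finally have A: "(f1 - f2) - (g1 z - g2 z)/(s*z) \<ge> 0" .
    have pw: "z powr (-1/s - 1) = z powr (-1/s) / z" using zp by (simp add: powr_diff)
    have "(f1 - f2) * z powr (-1/s) + ((-1/s) * z powr (-1/s - 1)) * (g1 z - g2 z)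
          = z powr (-1/s) * ((f1 - f2) - (g1 z - g2 z)/(s*z))" unfolding pw using zp s_pos by (simp add: field_simps)
    also have "\<dots> \<ge> 0" using A by simp
    finally show "\<exists>D. (k has_real_derivative D) (at z) \<and> D \<ge> 0" using d by auto
  qed
  hence "(g1 x0 - g2 x0) * x0 powr (-1/s) * x powr (1/s) \<le> (g1 x - g2 x) * x powr (-1/s) * x powr (1/s)"
    unfolding k_def by (intro mult_right_mono) auto
  moreover have "x powr (-1/s) * x powr (1/s) = 1" using x x0_pos by (simp add: powr_add[symmetric])
  moreover have "(x / x0) powr (1/s) = x0 powr (-1/s) * x powr (1/s)"
  proof -
    have e: "x0 powr (-(1/s)) = 1 / x0 powr (1/s)" by (rule powr_minus_divide)
    have "(x / x0) powr (1/s) = x powr (1/s) / x0 powr (1/s)" using x0_pos x by (intro powr_divide)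
    thus ?thesis by (simp add: e)
  qed
  ultimately show ?thesis by (simp add: mult.assoc)
qed

lemma upper_growth:
  assumes g: "global_sol s P x0 g" and x: "x \<ge> x0"
  shows "1 + g x \<le> (1 + g x0) * (x / x0) powr (1/s)"
proof -
  define k where "k z = (1 + g z) * z powr (-1/s)" for z
  have "k x \<le> k x0"
  proof (rule DERIV_nonpos_imp_decreasing_open[of x0 x k])
    show "x0 \<le> x" by fact
    show "continuous_on {x0..x} k" unfolding k_def using x0_pos
      by (intro continuous_intros continuous_on_subset[OF gsol_cont[OF g]]) auto
    fix z assume z: "x0 < z" "z < x"
    have zp: "z > 0" using z x0_pos by simp
    define f1 where "f1 = ode_rhs s P z (g z)"
    have d: "(k has_real_derivative (0 + f1) * z powr (-1/s) + ((-1/s) * z powr (-1/s - 1)) * (1 + g z)) (at z)"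
      unfolding k_def f1_def using zp z
      by (intro DERIV_mult DERIV_add DERIV_const gsol_der_at[OF g] has_real_derivative_powr) auto
    have pos1: "g z > 0" using gsol_pos g z by auto
    have "f1 - (1 + g z)/(s*z) = - (P z / g z) / (s * z)"
      unfolding f1_def rhs_alt[OF zp pos1] using zp s_pos pos1 by (simp add: field_simps)
    also have "\<dots> \<le> 0" using P_nonneg[of z] zp s_pos pos1 by (auto intro!: divide_nonneg_pos)
    finally have A: "f1 - (1 + g z)/(s*z) \<le> 0" .
    have pw: "z powr (-1/s - 1) = z powr (-1/s) / z" using zp by (simp add: powr_diff)
    have "(0 + f1) * z powr (-1/s) + ((-1/s) * z powr (-1/s - 1)) * (1 + g z)
          = z powr (-1/s) * (f1 - (1 + g z)/(s*z))" unfolding pw using zp s_pos by (simp add: field_simps)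
    also have "\<dots> \<le> 0" using A by (simp add: mult_nonneg_nonpos)
    finally show "\<exists>D. (k has_real_derivative D) (at z) \<and> D \<le> 0" using d by auto
  qed
  hence "(1 + g x) * x powr (-1/s) * x powr (1/s) \<le> (1 + g x0) * x0 powr (-1/s) * x powr (1/s)"
    unfolding k_def by (intro mult_right_mono) auto
  moreover have "x powr (-1/s) * x powr (1/s) = 1" using x x0_pos by (simp add: powr_add[symmetric])
  moreover have "(x / x0) powr (1/s) = x0 powr (-1/s) * x powr (1/s)"
  proof -
    have e: "x0 powr (-(1/s)) = 1 / x0 powr (1/s)" by (rule powr_minus_divide)
    have "(x / x0) powr (1/s) = x powr (1/s) / x0 powr (1/s)" using x0_pos x by (intro powr_divide)
    thus ?thesis by (simp add: e)
  qed
  ultimately show ?thesis by (simp add: mult.assoc)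
qed

lemma comp_le:
  assumes g1: "global_sol s P x0 g1" and g2: "global_sol s P x0 g2"
    and le: "g1 x0 \<le> g2 x0" and b: "b \<ge> x0"
  shows "g1 b \<le> g2 b"
proof -
  have c1: "continuous_on {x0..b} g1" by (rule continuous_on_subset[OF gsol_cont[OF g1]]) auto
  have c2: "continuous_on {x0..b} g2" by (rule continuous_on_subset[OF gsol_cont[OF g2]]) auto
  obtain z1 where z1: "z1 \<in> {x0..b}" "\<forall>y\<in>{x0..b}. g1 z1 \<le> g1 y"
    using continuous_attains_inf[OF compact_Icc _ c1] b by auto
  obtain z2 where z2: "z2 \<in> {x0..b}" "\<forall>y\<in>{x0..b}. g2 z2 \<le> g2 y"
    using continuous_attains_inf[OF compact_Icc _ c2] b by auto
  define m1 where "m1 = g1 z1"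
  define m2 where "m2 = g2 z2"
  have m1: "m1 > 0" using gsol_pos[OF g1, of z1] z1 by (auto simp: m1_def)
  have m2: "m2 > 0" using gsol_pos[OF g2, of z2] z2 by (auto simp: m2_def)
  define K where "K = (1 + P b / (m1 * m2)) / (s * x0)"
  have "g1 b - g2 b \<le> 0"
  proof (rule GL[of x0 b "\<lambda>x. g1 x - g2 x" K])
    show "x0 \<le> b" by fact
    show "continuous_on {x0..b} (\<lambda>x. g1 x - g2 x)" by (intro continuous_intros c1 c2)
    show "g1 x0 - g2 x0 \<le> 0" using le by simp
    fix z assume z: "x0 < z" "z < b"
    have zp: "z > 0" using z x0_pos by simp
    have pos1: "g1 z \<ge> m1" and pos2: "g2 z \<ge> m2" using z1 z2 z by (auto simp: m1_def m2_def)
    have p1: "g1 z > 0" and p2: "g2 z > 0" using pos1 pos2 m1 m2 by auto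
    have d: "((\<lambda>x. g1 x - g2 x) has_real_derivative ode_rhs s P z (g1 z) - ode_rhs s P z (g2 z)) (at z)"
      using z by (intro DERIV_diff gsol_der_at[OF g1] gsol_der_at[OF g2]) auto
    have eq: "ode_rhs s P z (g1 z) - ode_rhs s P z (g2 z) = (g1 z - g2 z) * ((1 + P z / (g1 z * g2 z)) / (s * z))"
      unfolding rhs_alt[OF zp p1] rhs_alt[OF zp p2] using zp s_pos p1 p2 by (simp add: field_simps)
    have Kb: "(1 + P z / (g1 z * g2 z)) / (s * z) \<le> K"
    proof -
      have "P z / (g1 z * g2 z) \<le> P b / (m1 * m2)"
        using P_le[of z b] P_nonneg[of z] zp z pos1 pos2 m1 m2
        by (intro frac_le mult_mono) auto
      hence "1 + P z / (g1 z * g2 z) \<le> 1 + P b / (m1 * m2)" by simp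
      moreover have "0 \<le> 1 + P z / (g1 z * g2 z)" using P_nonneg[of z] zp p1 p2 by simp
      ultimately show ?thesis unfolding K_def using zp z s_pos x0_pos
        by (intro frac_le) auto
    qed
    show "\<exists>D. ((\<lambda>x. g1 x - g2 x) has_real_derivative D) (at z) \<and> (g1 z - g2 z > 0 \<longrightarrow> D \<le> K * (g1 z - g2 z))"
    proof (intro exI conjI impI)
      show "((\<lambda>x. g1 x - g2 x) has_real_derivative ode_rhs s P z (g1 z) - ode_rhs s P z (g2 z)) (at z)" by (rule d)
      assume u: "g1 z - g2 z > 0"
      show "ode_rhs s P z (g1 z) - ode_rhs s P z (g2 z) \<le> K * (g1 z - g2 z)"
        unfolding eq using mult_left_mono[OF Kb, of "g1 z - g2 z"] u by (simp add: mult.commute[of K])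
    qed
  qed
  thus ?thesis by simp
qed

lemma uniq:
  assumes g1: "global_sol s P x0 g1" and g2: "global_sol s P x0 g2"
    and eq: "g1 x0 = g2 x0" and b: "b \<ge> x0"
  shows "g1 b = g2 b"
  using comp_le[OF g1 g2 _ b] comp_le[OF g2 g1 _ b] eq by force


lemma gc_below:
  assumes g: "global_sol s P x0 g" and x1: "x1 \<ge> x0"
  shows "gamma_c P x1 < g x1"
proof (rule ccontr)
  assume ng: "\<not> gamma_c P x1 < g x1"
  define c where "c = g x1"
  have c0: "c > 0" using gsol_pos[OF g x1] by (simp add: c_def)
  have Qc: "c + c^2 \<le> P x1"
  proof -
    have "2*c + 1 \<le> sqrt (1 + 4 * P x1)" using ng by (simp add: gamma_c_def c_def)
    hence "(2*c+1)^2 \<le> (sqrt (1 + 4*P x1))^2" using c0 by (intro power_mono) auto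
    hence "(2*c+1)^2 \<le> 1 + 4 * P x1" using P_nonneg[of x1] x1 x0_pos by simp
    thus ?thesis by (simp add: power2_eq_square algebra_simps)
  qed
  have stay: "g x \<le> c" if x: "x \<ge> x1" for x
  proof -
    define K where "K = (1/c + 2) / (s * x0)"
    have "g x - c \<le> 0"
    proof (rule GL[of x1 x "\<lambda>z. g z - c" K])
      show "x1 \<le> x" by fact
      show "continuous_on {x1..x} (\<lambda>z. g z - c)"
        by (intro continuous_intros continuous_on_subset[OF gsol_cont[OF g]]) (use x1 in auto)
      show "g x1 - c \<le> 0" by (simp add: c_def)
      fix z assume z: "x1 < z" "z < x"
      have zp: "z > 0" and zx0: "z \<ge> x0" and zx0': "z > x0" using z x1 x0_pos by auto
      have gp: "g z > 0" using gsol_pos[OF g zx0] .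
      show "\<exists>D. ((\<lambda>z. g z - c) has_real_derivative D) (at z) \<and> (g z - c > 0 \<longrightarrow> D \<le> K * (g z - c))"
      proof (intro exI conjI impI)
        show "((\<lambda>z. g z - c) has_real_derivative ode_rhs s P z (g z)) (at z)"
          using gsol_der_at[OF g zx0'] by (auto intro!: derivative_eq_intros)
        assume u: "g z - c > 0"
        have "ode_rhs s P z (g z) = (g z + (g z)^2 - P z) / (s * z * g z)" by (simp add: ode_rhs_def)
        also have "\<dots> \<le> (g z + (g z)^2 - (c + c^2)) / (s * z * g z)"
          using P_le[of x1 z] Qc z x1 x0_pos zp gp s_pos by (intro divide_right_mono) auto
        also have "\<dots> = (g z - c) * ((1 + g z + c) / (s * z * g z))"
          using gp zp s_pos by (simp add: power2_eq_square field_simps)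
        also have "\<dots> \<le> (g z - c) * K"
        proof (rule mult_left_mono)
          show "0 \<le> g z - c" using u by simp
          have "(1 + g z + c) / (s * z * g z) = ((1 + c) / g z + 1) / (s * z)"
            using gp zp s_pos by (simp add: field_simps)
          also have "\<dots> \<le> ((1 + c)/c + 1) / (s * z)"
          proof -
            have "(1 + c) / g z \<le> (1 + c) / c" using u c0 by (intro divide_left_mono) auto
            thus ?thesis using zp s_pos by (intro divide_right_mono) auto
          qed
          also have "\<dots> \<le> ((1 + c)/c + 1) / (s * x0)"
            using zx0 x0_pos s_pos c0 by (intro divide_left_mono mult_left_mono) (auto intro: add_pos_nonneg)
          also have "\<dots> = K" using c0 by (simp add: K_def field_simps)
          finally show "(1 + g z + c) / (s * z * g z) \<le> K" .
        qed
        finally show "ode_rhs s P z (g z) \<le> K * (g z - c)" by (simp add: mult.commute)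
      qed
    qed
    thus ?thesis by simp
  qed
  define x2 where "x2 = x1 + 1"
  define \<delta> where "\<delta> = P x2 - P x1"
  have \<delta>: "\<delta> > 0" using P_less[of x1 x2] x1 x0_pos by (simp add: \<delta>_def x2_def)
  define w where "w z = (g z)^2 + (2*\<delta>/s) * ln z" for z
  define X where "X = max x2 (exp (s * w x2 / (2*\<delta>) + 1))"
  have X: "X \<ge> x2" by (simp add: X_def)
  have "w X \<le> w x2"
  proof (rule DERIV_nonpos_imp_decreasing_open[of x2 X w])
    show "x2 \<le> X" by (rule X)
    show "continuous_on {x2..X} w" unfolding w_def using x1 x0_pos
      by (intro continuous_intros continuous_on_subset[OF gsol_cont[OF g]]) (auto simp: x2_def)
    fix z assume z: "x2 < z" "z < X"
    have zp: "z > 0" and zx0: "z \<ge> x0" and zx0': "z > x0" using z x1 x0_pos by (auto simp: x2_def)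
    have gp: "g z > 0" using gsol_pos[OF g zx0] .
    have d: "(w has_real_derivative 2 * g z * ode_rhs s P z (g z) + (2*\<delta>/s) * (1/z)) (at z)"
      unfolding w_def using gsol_der_at[OF g zx0'] zp s_pos by (auto intro!: derivative_eq_intros)
    have "2 * g z * ode_rhs s P z (g z) + (2*\<delta>/s) * (1/z) = 2 * (g z + (g z)^2 - P z + \<delta>) / (s * z)"
      using gp zp s_pos by (simp add: ode_rhs_def field_simps)
    also have "\<dots> \<le> 0"
    proof -
      have "g z \<le> c" using stay[of z] z by (simp add: x2_def)
      hence "g z + (g z)^2 \<le> c + c^2" using gp by (intro add_mono power_mono) auto
      moreover have "P x2 \<le> P z" using P_le[of x2 z] z x1 x0_pos by (auto simp: x2_def)
      ultimately have "g z + (g z)^2 - P z + \<delta> \<le> 0" using Qc by (simp add: \<delta>_def)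
      thus ?thesis using zp s_pos by (simp add: divide_nonpos_pos mult_nonneg_nonpos)
    qed
    finally show "\<exists>D. (w has_real_derivative D) (at z) \<and> D \<le> 0" using d by auto
  qed
  moreover have "(2*\<delta>/s) * ln X > w x2"
  proof -
    have Xp: "X > 0" using X x1 x0_pos by (simp add: x2_def)
    have "exp (s * w x2 / (2*\<delta>) + 1) \<le> X" by (simp add: X_def)
    hence l: "s * w x2 / (2*\<delta>) + 1 \<le> ln X" using Xp by (subst ln_ge_iff) auto
    have "(2*\<delta>/s) * (s * w x2 / (2*\<delta>) + 1) \<le> (2*\<delta>/s) * ln X"
      using \<delta> s_pos by (intro mult_left_mono[OF l]) auto
    moreover have "(2*\<delta>/s) * (s * w x2 / (2*\<delta>) + 1) = w x2 + 2*\<delta>/s" using \<delta> s_pos by (simp add: field_simps)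
    moreover have "2*\<delta>/s > 0" using \<delta> s_pos by simp
    ultimately show ?thesis by linarith
  qed
  ultimately show False using zero_le_power2[of "g X"] unfolding w_def by linarith
qed


lemma exist_sol:
  assumes x1: "x1 \<ge> x0" and v: "v > 0" and Pb: "\<And>x. x \<ge> 0 \<Longrightarrow> P x < v + v^2"
  shows "\<exists>h. global_sol s P x0 h \<and> h x1 = v"
proof -
  have x1p: "x1 > 0" using x1 x0_pos by simp
  define Ff where "Ff x u = (1 + max v u - P x / max v u) / (s * x)" for x u
  obtain Yf where Yf0: "Yf x1 = v" and Yfd: "\<And>t. t \<ge> x1 \<Longrightarrow> (Yf has_real_derivative Ff t (Yf t)) (at t within {x1..})"
  proof -
    have "\<exists>y. y x1 = v \<and> (\<forall>t\<ge>x1. (y has_real_derivative Ff t (y t)) (at t within {x1..}))"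
    proof (rule picard[where K="(1 + (v + v^2)/v^2)/(s*x0)"])
      show "0 \<le> (1 + (v + v^2)/v^2)/(s*x0)" using v s_pos x0_pos by simp
      fix y show "continuous_on {x1..} (\<lambda>t. Ff t y)" unfolding Ff_def using x1p s_pos v
        by (intro continuous_intros continuous_on_subset[OF Pcont]) (auto simp: max_def)
    next
      fix t y z assume t: "x1 \<le> t"
      show "\<bar>Ff t y - Ff t z\<bar> \<le> (1 + (v + v^2)/v^2)/(s*x0) * \<bar>y - z\<bar>"
        unfolding Ff_def
      proof (rule lip_clamp)
        show "0 < v" by (rule v)
        show "0 \<le> P t" using P_nonneg[of t] t x1p by simp
        show "P t \<le> v + v^2" using Pb[of t] t x1p by simp
        show "0 < s * x0" using s_pos x0_pos by simp
        show "s * x0 \<le> s * t" using s_pos t x1 by simp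
      qed
    qed
    thus ?thesis using that by blast
  qed
  have Yfc: "continuous_on {x1..} Yf"
    unfolding continuous_on_eq_continuous_within using Yfd DERIV_continuous by fastforce
  have Yfv: "Yf x \<ge> v" if x: "x \<ge> x1" for x
  proof -
    have "v - Yf x \<le> 0"
    proof (rule GL[of x1 x "\<lambda>z. v - Yf z" 0])
      show "x1 \<le> x" by fact
      show "continuous_on {x1..x} (\<lambda>z. v - Yf z)"
        by (intro continuous_intros continuous_on_subset[OF Yfc]) auto
      show "v - Yf x1 \<le> 0" by (simp add: Yf0)
      fix z assume z: "x1 < z" "z < x"
      have zp: "z > 0" using z x1p by simp
      have dz: "(Yf has_real_derivative Ff z (Yf z)) (at z)"
        using Yfd[of z] at_within_ge_open[of x1 z] z by simp
      show "\<exists>D. ((\<lambda>z. v - Yf z) has_real_derivative D) (at z) \<and> (v - Yf z > 0 \<longrightarrow> D \<le> 0 * (v - Yf z))"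
      proof (intro exI conjI impI)
        show "((\<lambda>z. v - Yf z) has_real_derivative - Ff z (Yf z)) (at z)"
          using dz by (auto intro!: derivative_eq_intros)
        assume "v - Yf z > 0"
        hence mx: "max v (Yf z) = v" by simp
        have "P z / v < 1 + v" using Pb[of z] zp v by (simp add: divide_less_eq power2_eq_square algebra_simps)
        hence "0 < (1 + v - P z / v) / (s * z)" using zp s_pos by simp
        thus "- Ff z (Yf z) \<le> 0 * (v - Yf z)" unfolding Ff_def mx by simp
      qed
    qed
    thus ?thesis by simp
  qed
  have Yfsol: "(Yf has_real_derivative ode_rhs s P t (Yf t)) (at t within {x1..})" if t: "t \<ge> x1" for t
  proof -
    have "Yf t > 0" using Yfv[OF t] v by simp
    hence "Ff t (Yf t) = ode_rhs s P t (Yf t)"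
      unfolding Ff_def using Yfv[OF t] rhs_alt[of t "Yf t"] t x1p by (simp add: max_def)
    thus ?thesis using Yfd[OF t] by simp
  qed
  define m where "m = min v (min (1/2) (P x0 / 4))"
  have Px0: "P x0 > 0" using P_posx x0_pos by simp
  have m0: "m > 0" using v Px0 by (simp add: m_def)
  have mQ: "m + m^2 < P x0"
  proof -
    have "m \<le> 1/2" "m \<le> P x0 / 4" by (auto simp: m_def)
    hence "m^2 \<le> m * (1/2)" using m0 by (simp add: power2_eq_square mult_left_mono)
    thus ?thesis using \<open>m \<le> P x0 / 4\<close> Px0 by linarith
  qed
  define r where "r \<tau> = x0 + x1 - min \<tau> x1" for \<tau>
  have r: "\<tau> \<ge> x0 \<Longrightarrow> x0 \<le> r \<tau> \<and> r \<tau> \<le> x1" for \<tau> using x1 by (auto simp: r_def min_def)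
  define Fb where "Fb \<tau> u = - ((1 + max m u - P (r \<tau>) / max m u) / (s * r \<tau>))" for \<tau> u
  obtain H where H0: "H x0 = v" and Hd: "\<And>t. t \<ge> x0 \<Longrightarrow> (H has_real_derivative Fb t (H t)) (at t within {x0..})"
  proof -
    have "\<exists>y. y x0 = v \<and> (\<forall>t\<ge>x0. (y has_real_derivative Fb t (y t)) (at t within {x0..}))"
    proof (rule picard[where K="(1 + P x1/m^2)/(s*x0)"])
      show "0 \<le> (1 + P x1/m^2)/(s*x0)" using P_nonneg[of x1] x1p s_pos x0_pos by simp
      have cr: "continuous_on {x0..} r" unfolding r_def by (intro continuous_intros)
      have cPr: "continuous_on {x0..} (\<lambda>\<tau>. P (r \<tau>))"
        by (rule continuous_on_compose2[OF Pcont cr]) (use r x0_pos in force)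
      have rpos: "\<forall>\<tau>\<in>{x0..}. s * r \<tau> \<noteq> 0" using r x0_pos s_pos by force
      fix y have mp: "max m y \<noteq> 0" using m0 by (simp add: max_def)
      show "continuous_on {x0..} (\<lambda>t. Fb t y)" unfolding Fb_def
        by (intro continuous_intros cPr cr) (use rpos mp in auto)
    next
      fix t y z assume t: "x0 \<le> t"
      have "\<bar>(1 + max m y - P (r t) / max m y) / (s * r t) - (1 + max m z - P (r t) / max m z) / (s * r t)\<bar>
            \<le> (1 + P x1/m^2)/(s*x0) * \<bar>y - z\<bar>"
      proof (rule lip_clamp)
        show "0 < m" by (rule m0)
        show "0 \<le> P (r t)" using P_nonneg[of "r t"] r[OF t] x0_pos by simp
        show "P (r t) \<le> P x1" using P_le[of "r t" x1] r[OF t] x0_pos by simp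
        show "0 < s * x0" using s_pos x0_pos by simp
        show "s * x0 \<le> s * r t" using s_pos r[OF t] by simp
      qed
      thus "\<bar>Fb t y - Fb t z\<bar> \<le> (1 + P x1/m^2)/(s*x0) * \<bar>y - z\<bar>"
        unfolding Fb_def by (simp add: abs_minus_commute)
    qed
    thus ?thesis using that by blast
  qed
  have Hc: "continuous_on {x0..} H"
    unfolding continuous_on_eq_continuous_within using Hd DERIV_continuous by fastforce
  have Hm: "H x \<ge> m" if x: "x \<ge> x0" for x
  proof -
    have "m - H x \<le> 0"
    proof (rule GL[of x0 x "\<lambda>z. m - H z" 0])
      show "x0 \<le> x" by fact
      show "continuous_on {x0..x} (\<lambda>z. m - H z)"
        by (intro continuous_intros continuous_on_subset[OF Hc]) auto
      show "m - H x0 \<le> 0" by (simp add: H0 m_def)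
      fix z assume z: "x0 < z" "z < x"
      have dz: "(H has_real_derivative Fb z (H z)) (at z)"
        using Hd[of z] at_within_ge_open[of x0 z] z by simp
      show "\<exists>D. ((\<lambda>z. m - H z) has_real_derivative D) (at z) \<and> (m - H z > 0 \<longrightarrow> D \<le> 0 * (m - H z))"
      proof (intro exI conjI impI)
        show "((\<lambda>z. m - H z) has_real_derivative - Fb z (H z)) (at z)"
          using dz by (auto intro!: derivative_eq_intros)
        assume "m - H z > 0"
        hence mx: "max m (H z) = m" by simp
        have rz: "x0 \<le> r z" "r z \<le> x1" using r[of z] z by auto
        have "P x0 \<le> P (r z)" using P_le[of x0 "r z"] rz x0_pos by simp
        hence "1 + m < P (r z) / m" using mQ m0 by (simp add: less_divide_eq power2_eq_square algebra_simps)
        hence "(1 + m - P (r z) / m) / (s * r z) < 0" using rz x0_pos s_pos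
          by (intro divide_neg_pos) auto
        thus "- Fb z (H z) \<le> 0 * (m - H z)" unfolding Fb_def mx by simp
      qed
    qed
    thus ?thesis by simp
  qed
  have Ld: "((\<lambda>x. H (x0 + x1 - x)) has_real_derivative ode_rhs s P x (H (x0 + x1 - x))) (at x within {x0..x1})"
    if x: "x \<in> {x0..x1}" for x
  proof -
    define \<tau> where "\<tau> = x0 + x1 - x"
    have \<tau>: "x0 \<le> \<tau>" "\<tau> \<le> x1" using x by (auto simp: \<tau>_def)
    have rt: "r \<tau> = x" using \<tau> by (simp add: r_def \<tau>_def)
    have "(H has_real_derivative Fb \<tau> (H \<tau>)) (at \<tau> within ((\<lambda>x. x0 + x1 - x) ` {x0..x1}))"
      by (rule DERIV_subset[OF Hd[OF \<tau>(1)]]) auto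
    hence "(H has_real_derivative Fb \<tau> (H \<tau>)) (at ((\<lambda>x. x0 + x1 - x) x) within ((\<lambda>x. x0 + x1 - x) ` {x0..x1}))"
      by (simp add: \<tau>_def)
    moreover have "((\<lambda>x. x0 + x1 - x) has_real_derivative -1) (at x within {x0..x1})"
      by (auto intro!: derivative_eq_intros)
    ultimately have "(H \<circ> (\<lambda>x. x0 + x1 - x) has_real_derivative Fb \<tau> (H \<tau>) * -1) (at x within {x0..x1})"
      by (rule DERIV_image_chain)
    moreover have "Fb \<tau> (H \<tau>) * -1 = ode_rhs s P x (H \<tau>)"
    proof -
      have Hp: "H \<tau> \<ge> m" using Hm \<tau> by simp
      hence "max m (H \<tau>) = H \<tau>" by simp
      moreover have "x > 0" using x x0_pos by simp
      moreover have "H \<tau> > 0" using Hp m0 by simp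
      ultimately show ?thesis unfolding Fb_def rt using rhs_alt by simp
    qed
    ultimately show ?thesis by (simp add: o_def \<tau>_def)
  qed
  define h where "h x = (if x \<le> x1 then H (x0 + x1 - x) else Yf x)" for x
  have hx1: "h x1 = v" by (simp add: h_def H0)
  have hR: "h x = Yf x" if "x \<ge> x1" for x using that hx1 Yf0 by (auto simp: h_def)
  have hL: "h x = H (x0 + x1 - x)" if "x \<le> x1" for x using that by (simp add: h_def)
  have hd: "(h has_real_derivative ode_rhs s P x (h x)) (at x within {x0..})" if x: "x \<ge> x0" for x
  proof -
    have L: "(h has_real_derivative ode_rhs s P x (h x)) (at x within {x0..x1})" if xx: "x \<le> x1"
    proof -
      have e: "ode_rhs s P x (h x) = ode_rhs s P x (H (x0+x1-x))" using hL[OF xx] by simp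
      show ?thesis unfolding e
        by (rule has_field_derivative_transform_within[where d=1, OF Ld[of x]]) (use x xx hL in auto)
    qed
    have R: "(h has_real_derivative ode_rhs s P x (h x)) (at x within {x1..})" if xx: "x \<ge> x1"
    proof -
      have e: "ode_rhs s P x (h x) = ode_rhs s P x (Yf x)" using hR[OF xx] by simp
      show ?thesis unfolding e
        by (rule has_field_derivative_transform_within[where d=1, OF Yfsol[OF xx]]) (use xx hR in auto)
    qed
    consider "x < x1" | "x = x1" | "x > x1" by linarith
    thus ?thesis
    proof cases
      case 1 thus ?thesis using L within_upto[of x x1 x0] by simp
    next
      case 3 thus ?thesis using R within_from[of x1 x x0] x1 by simp
    next
      case 2
      have U: "{x0..} = {x0..x1} \<union> {x1..}" using x1 by auto
      show ?thesis using L R 2 unfolding U has_field_derivative_iff Lim_within_Un by simp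
    qed
  qed
  have hp: "h x > 0" if "x \<ge> x0" for x
  proof (cases "x \<le> x1")
    case True thus ?thesis using Hm[of "x0 + x1 - x"] m0 hL by simp
  next
    case False thus ?thesis using Yfv[of x] v hR by simp
  qed
  show ?thesis using hd hp hx1 unfolding global_sol_def by blast
qed

end



lemma mono_lim_ereal:
  fixes f :: "real \<Rightarrow> real"
  assumes mono: "\<And>x y. 0 \<le> x \<Longrightarrow> x \<le> y \<Longrightarrow> f x \<le> f y"
  shows "((\<lambda>y. ereal (f y)) \<longlongrightarrow> (SUP y\<in>{0..}. ereal (f y))) at_top"
proof (rule increasing_tendsto)
  show "\<forall>\<^sub>F n in at_top. ereal (f n) \<le> (SUP y\<in>{0..}. ereal (f y))"
    unfolding eventually_at_top_linorder by (intro exI[of _ 0]) (auto intro: SUP_upper)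
  fix a assume "a < (SUP y\<in>{0..}. ereal (f y))"
  then obtain y0 where y0: "y0 \<in> {0..}" "a < ereal (f y0)" by (auto simp: less_SUP_iff)
  show "\<forall>\<^sub>F n in at_top. a < ereal (f n)"
    unfolding eventually_at_top_linorder
  proof (intro exI[of _ y0] allI impI)
    fix n assume "y0 \<le> n"
    hence "f y0 \<le> f n" using mono y0 by auto
    thus "a < ereal (f n)" using y0 by (meson ereal_less_eq(3) less_le_trans)
  qed
qed

lemma Lim_mono_ereal:
  fixes f :: "real \<Rightarrow> real"
  assumes mono: "\<And>x y. 0 \<le> x \<Longrightarrow> x \<le> y \<Longrightarrow> f x \<le> f y"
  shows "Lim at_top (\<lambda>y. ereal (f y)) = (SUP y\<in>{0..}. ereal (f y))"
  by (rule tendsto_Lim[OF _ mono_lim_ereal[OF mono]]) simp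

theorem corollary1:
  fixes s x0 :: real and P gstar :: "real \<Rightarrow> real"
  assumes s_pos: "s > 0" and x0_pos: "x0 > 0"
    and P_C2: "C2_on_nonneg P"
    and P_incr: "strict_mono_on {0..} P"
    and P0: "P 0 = 0" and P_pos: "\<forall>x>0. P x > 0"
    and P_int: "(\<lambda>z. P z * z powr (-1 - 2 / s)) integrable_on {x0..}"
    and sep: "separatrix s P x0 gstar"
  shows "(\<forall>g. global_sol s P x0 g \<and> g x0 > gstar x0 \<longrightarrow>
            (\<exists>C1 C2. 0 < C1 \<and> C1 < C2 \<and>
               (\<forall>\<^sub>F x in at_top. C1 * x powr (1 / s) \<le> g x \<and> g x \<le> C2 * x powr (1 / s))))
       \<and> (\<exists>C>0. \<forall>x\<ge>x0. gamma_c P x < gstar x \<and>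
            ereal (gstar x) \<le> min (Lim at_top (\<lambda>y. ereal (gamma_c P y)))
                                   (ereal (C * x powr (1 / s))))
       \<and> (Lim at_top (\<lambda>x. ereal (P x)) < \<infinity> \<longrightarrow>
            bounded (gstar ` {x0..}) \<and>
            (\<forall>g. global_sol s P x0 g \<and> bounded (g ` {x0..}) \<longrightarrow> (\<forall>x\<ge>x0. g x = gstar x)))"
proof -
  interpret odeP s x0 P
    using s_pos x0_pos C2_cont[OF P_C2] P_incr P0 by unfold_locales
  have gs: "global_sol s P x0 gstar" using sep by (simp add: separatrix_def)
  have gsmin: "\<And>h. global_sol s P x0 h \<Longrightarrow> gstar x0 \<le> h x0" using sep by (simp add: separatrix_def)
  have pd: "(x / x0) powr (1/s) = x powr (1/s) / x0 powr (1/s)" if "x \<ge> x0" for x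
    using that x0_pos by (intro powr_divide)
  have x0p: "x0 powr (1/s) > 0" using x0_pos by simp
  have part1: "\<forall>g. global_sol s P x0 g \<and> g x0 > gstar x0 \<longrightarrow>
            (\<exists>C1 C2. 0 < C1 \<and> C1 < C2 \<and>
               (\<forall>\<^sub>F x in at_top. C1 * x powr (1 / s) \<le> g x \<and> g x \<le> C2 * x powr (1 / s)))"
  proof (intro allI impI, elim conjE)
    fix g assume g: "global_sol s P x0 g" and lt: "gstar x0 < g x0"
    define C1 where "C1 = (g x0 - gstar x0) / x0 powr (1/s)"
    define C2 where "C2 = max (2*C1) ((1 + g x0) / x0 powr (1/s))"
    have C1: "C1 > 0" using lt x0p by (simp add: C1_def)
    have C12: "C1 < C2" using C1 by (simp add: C2_def)
    have "\<forall>\<^sub>F x in at_top. C1 * x powr (1 / s) \<le> g x \<and> g x \<le> C2 * x powr (1 / s)"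
      unfolding eventually_at_top_linorder
    proof (intro exI[of _ x0] allI impI conjI)
      fix x assume x: "x0 \<le> x"
      have "C1 * x powr (1/s) = (g x0 - gstar x0) * (x / x0) powr (1/s)"
        by (simp add: C1_def pd[OF x])
      also have "\<dots> \<le> g x - gstar x" by (rule diff_growth[OF g gs lt x])
      also have "\<dots> \<le> g x" using gsol_pos[OF gs x] by simp
      finally show "C1 * x powr (1/s) \<le> g x" .
      have "g x \<le> 1 + g x" by simp
      also have "\<dots> \<le> (1 + g x0) * (x / x0) powr (1/s)" by (rule upper_growth[OF g x])
      also have "\<dots> = ((1 + g x0) / x0 powr (1/s)) * x powr (1/s)" by (simp add: pd[OF x])
      also have "\<dots> \<le> C2 * x powr (1/s)" by (intro mult_right_mono) (auto simp: C2_def)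
      finally show "g x \<le> C2 * x powr (1/s)" .
    qed
    thus "\<exists>C1 C2. 0 < C1 \<and> C1 < C2 \<and>
               (\<forall>\<^sub>F x in at_top. C1 * x powr (1 / s) \<le> g x \<and> g x \<le> C2 * x powr (1 / s))"
      using C1 C12 by blast
  qed
  have gc_mono: "gamma_c P x \<le> gamma_c P y" if "0 \<le> x" "x \<le> y" for x y
    using P_le[OF that] by (simp add: gamma_c_def)
  define l where "l = (SUP y\<in>{0..}. ereal (gamma_c P y))"
  have Liml: "Lim at_top (\<lambda>y. ereal (gamma_c P y)) = l"
    unfolding l_def by (rule Lim_mono_ereal[OF gc_mono])
  have gcl: "ereal (gamma_c P y) \<le> l" if "y \<ge> 0" for y
    unfolding l_def using that by (intro SUP_upper) auto
  have l0: "ereal 0 \<le> l" using gcl[of 0] P0 by (simp add: gamma_c_def)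
  have gsl: "ereal (gstar x1) \<le> l" if x1: "x1 \<ge> x0" for x1
  proof (rule ccontr)
    assume "\<not> ereal (gstar x1) \<le> l"
    hence ll: "l < ereal (gstar x1)" by simp
    then obtain L where L: "l = ereal L" using l0 by (cases l) auto
    have LL: "L < gstar x1" "0 \<le> L" using ll l0 L by auto
    define v where "v = (L + gstar x1) / 2"
    have v: "v > 0" "v < gstar x1" "L < v" using LL by (auto simp: v_def)
    have Pb: "P y < v + v^2" if y: "y \<ge> 0" for y
    proof -
      have "gamma_c P y \<le> L" using gcl[OF y] L by simp
      hence "sqrt (1 + 4 * P y) < 2 * v + 1" using v by (simp add: gamma_c_def)
      hence "(sqrt (1 + 4 * P y))^2 < (2 * v + 1)^2" using P_nonneg[OF y] by (intro power_strict_mono) auto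
      hence "1 + 4 * P y < (2 * v + 1)^2" using P_nonneg[OF y] by simp
      thus ?thesis by (simp add: power2_eq_square algebra_simps)
    qed
    obtain h where h: "global_sol s P x0 h" "h x1 = v" using exist_sol[OF x1 v(1) Pb] by blast
    have "gstar x0 \<le> h x0" by (rule gsmin[OF h(1)])
    moreover have "\<not> gstar x0 < h x0"
      using diff_pos[OF h(1) gs _ x1] h(2) v by auto
    moreover have "gstar x0 \<noteq> h x0"
      using uniq[OF h(1) gs _ x1] h(2) v by auto
    ultimately show False by simp
  qed
  have part2: "\<exists>C>0. \<forall>x\<ge>x0. gamma_c P x < gstar x \<and>
            ereal (gstar x) \<le> min (Lim at_top (\<lambda>y. ereal (gamma_c P y)))
                                   (ereal (C * x powr (1 / s)))"
  proof (intro exI[of _ "(1 + gstar x0) / x0 powr (1/s)"] conjI allI impI)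
    show "0 < (1 + gstar x0) / x0 powr (1/s)" using gsol_pos[OF gs, of x0] x0p by simp
    fix x assume x: "x0 \<le> x"
    show "gamma_c P x < gstar x" by (rule gc_below[OF gs x])
    have "gstar x \<le> 1 + gstar x" by simp
    also have "\<dots> \<le> (1 + gstar x0) * (x / x0) powr (1/s)" by (rule upper_growth[OF gs x])
    also have "\<dots> = ((1 + gstar x0) / x0 powr (1/s)) * x powr (1/s)" by (simp add: pd[OF x])
    finally have "ereal (gstar x) \<le> ereal ((1 + gstar x0) / x0 powr (1/s) * x powr (1/s))" by simp
    thus "ereal (gstar x) \<le> min (Lim at_top (\<lambda>y. ereal (gamma_c P y))) (ereal ((1 + gstar x0) / x0 powr (1/s) * x powr (1/s)))"
      using gsl[OF x] Liml by simp
  qed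
  have part3: "Lim at_top (\<lambda>x. ereal (P x)) < \<infinity> \<longrightarrow>
            bounded (gstar ` {x0..}) \<and>
            (\<forall>g. global_sol s P x0 g \<and> bounded (g ` {x0..}) \<longrightarrow> (\<forall>x\<ge>x0. g x = gstar x))"
  proof (intro impI conjI allI, goal_cases)
    case 1
    have "Lim at_top (\<lambda>x. ereal (P x)) = (SUP y\<in>{0..}. ereal (P y))"
      by (rule Lim_mono_ereal[OF P_le])
    hence Sinf: "(SUP y\<in>{0..}. ereal (P y)) < \<infinity>" using 1 by simp
    have S0: "ereal 0 \<le> (SUP y\<in>{0..}. ereal (P y))" using P0 by (intro SUP_upper2[of 0]) auto
    then obtain Bp where Bp: "(SUP y\<in>{0..}. ereal (P y)) = ereal Bp" using Sinf by (cases "SUP y\<in>{0..}. ereal (P y)") auto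
    have PB: "P y \<le> Bp" if "y \<ge> 0" for y
    proof -
      have "ereal (P y) \<le> (SUP y\<in>{0..}. ereal (P y))" using that by (intro SUP_upper) auto
      thus ?thesis using Bp by simp
    qed
    define G where "G = (sqrt (1 + 4 * Bp) - 1) / 2"
    have "l \<le> ereal G" unfolding l_def
    proof (rule SUP_least)
      fix y :: real assume "y \<in> {0..}"
      hence "P y \<le> Bp" "0 \<le> P y" using PB P_nonneg by auto
      thus "ereal (gamma_c P y) \<le> ereal G" by (simp add: gamma_c_def G_def)
    qed
    hence "gstar x \<le> G" if "x \<ge> x0" for x using gsl[OF that] by (meson ereal_less_eq(3) order_trans)
    hence "\<forall>y\<in>gstar ` {x0..}. norm y \<le> G" using gsol_pos[OF gs] by fastforce
    thus ?case unfolding bounded_iff by blast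
  next
    case (2 g x)
    hence g: "global_sol s P x0 g" and gb: "bounded (g ` {x0..})" and x: "x0 \<le> x" by auto
    have "g x0 = gstar x0"
    proof (rule ccontr)
      assume "g x0 \<noteq> gstar x0"
      hence lt: "gstar x0 < g x0" using gsmin[OF g] by simp
      obtain B where B: "\<forall>y\<in>g ` {x0..}. norm y \<le> B" using gb unfolding bounded_iff by blast
      have B0: "B \<ge> 0" using B[rule_format, of "g x0"] by auto
      define c where "c = g x0 - gstar x0"
      have c: "c > 0" using lt by (simp add: c_def)
      define z where "z = x0 * max 1 (((B + 1) / c) powr s)"
      have z: "z \<ge> x0" using x0_pos by (simp add: z_def)
      have "(B + 1) / c = (((B + 1) / c) powr s) powr (1/s)"
        using B0 c s_pos by (simp add: powr_powr)
      also have "\<dots> \<le> (z / x0) powr (1/s)"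
        using x0_pos s_pos by (intro powr_mono2) (auto simp: z_def)
      finally have "B + 1 \<le> c * (z / x0) powr (1/s)" using c by (simp add: divide_le_eq mult.commute)
      also have "\<dots> \<le> g z - gstar z" unfolding c_def by (rule diff_growth[OF g gs lt z])
      also have "\<dots> < g z" using gsol_pos[OF gs z] by simp
      finally have "B + 1 < g z" .
      moreover have "g z \<le> B" using B z by force
      ultimately show False by simp
    qed
    thus ?case using uniq[OF g gs _ x] by simp
  qed
  show ?thesis using part1 part2 part3 by blast
qed

end
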